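(* Let $L_n$ and $PL_n$ be as in the context and $n\ge 4$. The homomorphism $\phi_n:L_n\to\operatorname{Aut}(PL_n)$, $\phi_n(g)(x)=g^{-1}xg$ for $x\in PL_n$, is injective.
   Context: For $n\ge 2$, $L_n=\langle y_1,\dots,y_{n-1}\mid y_j^2=1\ (1\le j\le n-1),\ y_iy_{i+1}y_i=y_{i+1}y_iy_{i+1}\ (1\le i\le n-2)\rangle$ (no relations between $y_i,y_j$ with $|i-j|\ge 2$). Let $\pi:L_n\to S_n$ be the surjective homomorphism with $\pi(y_i)=(i\ i{+}1)$, the transposition, and $PL_n=\ker\pi$ (a normal subgroup, so conjugation restricts to automorphisms of $PL_n$). *)

theory Defs
  imports "HOL-Algebra.Algebra" "HOL-Combinatorics.Transposition"
begin

text \<open>Words in the generators y_1,...,y_{n-1}: a letter i stands for y_i.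
  Since every generator is an involution (y_i^2 = 1), the group L_n is the
  monoid presented by these generators and relations; we realise it as the
  quotient of the free monoid (lists) by the congruence generated by the
  defining relations.\<close>

definition words :: "nat \<Rightarrow> nat list set" where
  "words n = {w. set w \<subseteq> {1..<n}}"

inductive eqw :: "nat \<Rightarrow> nat list \<Rightarrow> nat list \<Rightarrow> bool" for n where
  eqw_refl: "w \<in> words n \<Longrightarrow> eqw n w w"
| eqw_sym: "eqw n u v \<Longrightarrow> eqw n v u"
| eqw_trans: "eqw n u v \<Longrightarrow> eqw n v w \<Longrightarrow> eqw n u w"
| eqw_inv: "u \<in> words n \<Longrightarrow> v \<in> words n \<Longrightarrow> 1 \<le> j \<Longrightarrow> j \<le> n - 1 \<Longrightarrow>
     eqw n (u @ [j, j] @ v) (u @ v)"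
| eqw_braid: "u \<in> words n \<Longrightarrow> v \<in> words n \<Longrightarrow> 1 \<le> i \<Longrightarrow> i \<le> n - 2 \<Longrightarrow>
     eqw n (u @ [i, Suc i, i] @ v) (u @ [Suc i, i, Suc i] @ v)"

definition wrel :: "nat \<Rightarrow> (nat list \<times> nat list) set" where
  "wrel n = {(u, v). eqw n u v}"

definition L :: "nat \<Rightarrow> nat list set monoid" where
  "L n = \<lparr> partial_object.carrier = words n // wrel n,
           monoid.mult = (\<lambda>A B. wrel n `` {(SOME a. a \<in> A) @ (SOME b. b \<in> B)}),
           monoid.one = wrel n `` {[]} \<rparr>"

definition perm_of_word :: "nat list \<Rightarrow> nat \<Rightarrow> nat" where
  "perm_of_word w = foldr (\<lambda>i f. transpose i (Suc i) \<circ> f) w id"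

definition piL :: "nat \<Rightarrow> nat list set \<Rightarrow> nat \<Rightarrow> nat" where
  "piL n A = perm_of_word (SOME w. w \<in> A)"

definition PL :: "nat \<Rightarrow> nat list set set" where
  "PL n = kernel (L n) (sym_group n) (piL n)"

definition phi :: "nat \<Rightarrow> nat list set \<Rightarrow> nat list set \<Rightarrow> nat list set" where
  "phi n g = (\<lambda>x\<in>PL n. inv\<^bsub>L n\<^esub> g \<otimes>\<^bsub>L n\<^esub> x \<otimes>\<^bsub>L n\<^esub> g)"

end

theory Submission
  imports Defs
begin

section \<open>Rewriting system\<close>

definition rl :: "nat list \<Rightarrow> nat list \<Rightarrow> bool" where
  "rl l r \<longleftrightarrow> (\<exists>i. l = [i,i] \<and> r = []) \<or> (\<exists>i. l = [i, Suc i, i] \<and> r = [Suc i, i, Suc i])"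

definition stp :: "nat \<Rightarrow> nat list \<Rightarrow> nat list \<Rightarrow> bool" where
  "stp n w w' \<longleftrightarrow> w \<in> words n \<and> (\<exists>x l r y. rl l r \<and> w = x @ l @ y \<and> w' = x @ r @ y)"

lemma words_append[simp]: "xs @ ys \<in> words n \<longleftrightarrow> xs \<in> words n \<and> ys \<in> words n"
  by (auto simp: words_def)

lemma words_Cons[simp]: "x # ys \<in> words n \<longleftrightarrow> x \<in> {1..<n} \<and> ys \<in> words n"
  by (auto simp: words_def)

lemma words_rev[simp]: "rev w \<in> words n \<longleftrightarrow> w \<in> words n"
  by (auto simp: words_def)

lemma words_Nil[simp]: "[] \<in> words n"
  by (auto simp: words_def)

lemma rl_set: "rl l r \<Longrightarrow> set r \<subseteq> set l"
  by (auto simp: rl_def)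

lemma stp_words: "stp n w w' \<Longrightarrow> w' \<in> words n"
  unfolding stp_def words_def using rl_set by fastforce

lemma stpI: "rl l r \<Longrightarrow> x @ l @ y \<in> words n \<Longrightarrow> stp n (x @ l @ y) (x @ r @ y)"
  unfolding stp_def by blast

lemma stpA: "x @ [i,i] @ y \<in> words n \<Longrightarrow> stp n (x @ [i,i] @ y) (x @ y)"
  using stpI[of "[i,i]" "[]" x y n] by (simp add: rl_def)

lemma stpB: "x @ [i,Suc i,i] @ y \<in> words n \<Longrightarrow> stp n (x @ [i,Suc i,i] @ y) (x @ [Suc i,i,Suc i] @ y)"
  using stpI[of "[i,Suc i,i]" "[Suc i,i,Suc i]" x y n] by (simp add: rl_def)

lemma stp_ctx: "stp n w w' \<Longrightarrow> a @ w @ b \<in> words n \<Longrightarrow> stp n (a @ w @ b) (a @ w' @ b)"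
proof -
  assume s: "stp n w w'" and wd: "a @ w @ b \<in> words n"
  then obtain x l r y where "rl l r" "w = x @ l @ y" "w' = x @ r @ y" unfolding stp_def by blast
  then show ?thesis using stpI[of l r "a @ x" "y @ b" n] wd by simp
qed

lemma stps_ctx: "(stp n)\<^sup>*\<^sup>* w w' \<Longrightarrow> a @ w @ b \<in> words n \<Longrightarrow> (stp n)\<^sup>*\<^sup>* (a @ w @ b) (a @ w' @ b)"
proof (induction rule: rtranclp_induct)
  case base then show ?case by simp
next
  case (step y z)
  have "(stp n)\<^sup>*\<^sup>* w y" using step.hyps(1) .
  have yw: "y \<in> words n"
    using step.hyps(1) step.prems by (induction rule: rtranclp_induct) (auto dest: stp_words)
  have "stp n (a @ y @ b) (a @ z @ b)"
    using stp_ctx[OF step.hyps(2)] yw step.prems by simp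
  then show ?case using step by (meson rtranclp.rtrancl_into_rtrancl)
qed

definition mu :: "nat \<Rightarrow> nat list \<Rightarrow> nat" where
  "mu n w = sum_list (map (\<lambda>a. n - a) w)"

lemma stp_mu: "stp n w w' \<Longrightarrow> mu n w' < mu n w"
  unfolding stp_def rl_def mu_def words_def by auto

lemma stp_len: "stp n w w' \<Longrightarrow> length w' \<le> length w"
  unfolding stp_def rl_def by auto

lemma stps_words: "(stp n)\<^sup>*\<^sup>* w w' \<Longrightarrow> w \<in> words n \<Longrightarrow> w' \<in> words n"
  by (induction rule: rtranclp_induct) (auto dest: stp_words)

lemma app_split: "length x1 \<le> length x2 \<Longrightarrow> x1 @ z1 = x2 @ z2 \<Longrightarrow> \<exists>t. x2 = x1 @ t \<and> z1 = t @ z2"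
  by (metis append_eq_append_conv_if append_eq_conv_conj)

definition joinable :: "nat \<Rightarrow> nat list \<Rightarrow> nat list \<Rightarrow> bool" where
  "joinable n a b \<longleftrightarrow> (\<exists>c. (stp n)\<^sup>*\<^sup>* a c \<and> (stp n)\<^sup>*\<^sup>* b c)"

lemma crit:
  assumes "rl l1 r1" "rl l2 r2" "length t < length l1" "l1 @ y1 = t @ l2 @ y2" "l1 @ y1 \<in> words n"
  shows "joinable n (r1 @ y1) (t @ r2 @ y2)"
proof -
  have lt: "t = [] \<or> (\<exists>a. t = [a]) \<or> (\<exists>a b. t = [a,b])"
    using assms(1,3) unfolding rl_def
    by (cases t; cases "tl t"; cases "tl (tl t)"; auto)
  from assms(1) obtain i where l1: "(l1 = [i,i] \<and> r1 = []) \<or> (l1 = [i, Suc i, i] \<and> r1 = [Suc i, i, Suc i])"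
    unfolding rl_def by blast
  from assms(2) obtain j where l2: "(l2 = [j,j] \<and> r2 = []) \<or> (l2 = [j, Suc j, j] \<and> r2 = [Suc j, j, Suc j])"
    unfolding rl_def by blast
  note wd = assms(5)
  show ?thesis
    using lt
  proof (elim disjE exE)
    assume "t = []"
    then show ?thesis using l1 l2 assms(4) by (auto simp: joinable_def)
  next
    fix a assume t: "t = [a]"
    from l1 show ?thesis
    proof (elim disjE conjE)
      assume L1: "l1 = [i,i]" "r1 = []"
      from l2 show ?thesis
      proof (elim disjE conjE)
        assume "l2 = [j,j]" "r2 = []"
        then show ?thesis using L1 t assms(4) by (auto simp: joinable_def)
      next
        assume L2: "l2 = [j, Suc j, j]" "r2 = [Suc j, j, Suc j]"
        then have e: "a = i" "j = i" "y1 = [Suc i, i] @ y2" using L1 t assms(4) by auto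
        have w2: "[i, Suc i, i] @ y2 \<in> words n" using wd L1 e by auto
        have s1: "stp n ([] @ [i, Suc i, i] @ (Suc i # y2)) ([] @ [Suc i, i, Suc i] @ (Suc i # y2))"
          by (rule stpB) (use w2 in auto)
        have s2: "stp n ([Suc i, i] @ [Suc i, Suc i] @ y2) ([Suc i, i] @ y2)"
          by (rule stpA) (use w2 in auto)
        show ?thesis unfolding joinable_def using s1 s2 L1 L2 e t
          by (intro exI[of _ "[Suc i, i] @ y2"]) auto
      qed
    next
      assume L1: "l1 = [i, Suc i, i]" "r1 = [Suc i, i, Suc i]"
      from l2 show ?thesis
        using L1 t assms(4) by auto
    qed
  next
    fix a b assume t: "t = [a,b]"
    from l1 show ?thesis
    proof (elim disjE conjE)
      assume L1: "l1 = [i,i]" "r1 = []"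
      then show ?thesis using t assms(3) by simp
    next
      assume L1: "l1 = [i, Suc i, i]" "r1 = [Suc i, i, Suc i]"
      from l2 show ?thesis
      proof (elim disjE conjE)
        assume L2: "l2 = [j,j]" "r2 = []"
        then have e: "a = i" "b = Suc i" "j = i" "y1 = i # y2" using L1 t assms(4) by auto
        have w2: "[i, Suc i, i] @ y2 \<in> words n" using wd L1 e by auto
        have s1: "stp n ([Suc i] @ [i, Suc i, i] @ y2) ([Suc i] @ [Suc i, i, Suc i] @ y2)"
          by (rule stpB) (use w2 in auto)
        have s2: "stp n ([] @ [Suc i, Suc i] @ (i # Suc i # y2)) ([] @ (i # Suc i # y2))"
          by (rule stpA) (use w2 in auto)
        show ?thesis unfolding joinable_def using s1 s2 L1 L2 e t
          by (intro exI[of _ "[i, Suc i] @ y2"]) auto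
      next
        assume L2: "l2 = [j, Suc j, j]" "r2 = [Suc j, j, Suc j]"
        then have e: "a = i" "b = Suc i" "j = i" "y1 = [Suc i, i] @ y2" using L1 t assms(4) by auto
        have w2: "[i, Suc i, i] @ y2 \<in> words n" using wd L1 e by auto
        have s1: "stp n ([Suc i, i] @ [Suc i, Suc i] @ (i # y2)) ([Suc i, i] @ (i # y2))"
          by (rule stpA) (use w2 in auto)
        have s2: "stp n ([Suc i] @ [i, i] @ y2) ([Suc i] @ y2)"
          by (rule stpA) (use w2 in auto)
        have s3: "stp n ([i] @ [Suc i, Suc i] @ (i # Suc i # y2)) ([i] @ (i # Suc i # y2))"
          by (rule stpA) (use w2 in auto)
        have s4: "stp n ([] @ [i, i] @ (Suc i # y2)) ([] @ (Suc i # y2))"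
          by (rule stpA) (use w2 in auto)
        have j1: "(stp n)\<^sup>*\<^sup>* (r1 @ y1) (Suc i # y2)"
          using s1 s2 L1 e by (auto intro: rtranclp.rtrancl_into_rtrancl)
        have j2: "(stp n)\<^sup>*\<^sup>* (t @ r2 @ y2) (Suc i # y2)"
          using s3 s4 L2 e t by (auto intro: rtranclp.rtrancl_into_rtrancl)
        show ?thesis unfolding joinable_def using j1 j2 by blast
      qed
    qed
  qed
qed

lemma joinable_sym: "joinable n a b \<Longrightarrow> joinable n b a"
  unfolding joinable_def by blast

lemma local_conf_aux:
  assumes "rl l1 r1" "rl l2 r2" "length x1 \<le> length x2" "w = x1 @ l1 @ y1" "w = x2 @ l2 @ y2"
    "w \<in> words n"
  shows "joinable n (x1 @ r1 @ y1) (x2 @ r2 @ y2)"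
proof -
  obtain t where t: "x2 = x1 @ t" "l1 @ y1 = t @ l2 @ y2"
    using app_split[OF assms(3), of "l1 @ y1" "l2 @ y2"] assms(4,5) by auto
  show ?thesis
  proof (cases "length t < length l1")
    case True
    have "joinable n (r1 @ y1) (t @ r2 @ y2)"
      by (rule crit[OF assms(1,2) True t(2)]) (use assms(4,6) in auto)
    then obtain c where c: "(stp n)\<^sup>*\<^sup>* (r1 @ y1) c" "(stp n)\<^sup>*\<^sup>* (t @ r2 @ y2) c"
      unfolding joinable_def by blast
    have "(stp n)\<^sup>*\<^sup>* (x1 @ (r1 @ y1) @ []) (x1 @ c @ [])"
      by (rule stps_ctx[OF c(1)]) (use assms rl_set[OF assms(1)] in \<open>auto simp: words_def\<close>)
    moreover have "(stp n)\<^sup>*\<^sup>* (x1 @ (t @ r2 @ y2) @ []) (x1 @ c @ [])"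
      by (rule stps_ctx[OF c(2)]) (use assms rl_set[OF assms(2)] t in \<open>auto simp: words_def\<close>)
    ultimately show ?thesis unfolding joinable_def using t by auto
  next
    case False
    then obtain m where m: "t = l1 @ m" "y1 = m @ l2 @ y2"
      using t(2) by (metis app_split append_eq_append_conv not_le_imp_less)
    have wd: "x1 @ l1 @ m @ l2 @ y2 \<in> words n" using assms m by simp
    have "stp n ((x1 @ r1 @ m) @ l2 @ y2) ((x1 @ r1 @ m) @ r2 @ y2)"
      by (rule stpI[OF assms(2)]) (use wd rl_set[OF assms(1)] in \<open>auto simp: words_def\<close>)
    moreover have "stp n (x1 @ l1 @ (m @ r2 @ y2)) (x1 @ r1 @ (m @ r2 @ y2))"
      by (rule stpI[OF assms(1)]) (use wd rl_set[OF assms(2)] in \<open>auto simp: words_def\<close>)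
    ultimately show ?thesis unfolding joinable_def using m t
      by (intro exI[of _ "x1 @ r1 @ m @ r2 @ y2"]) auto
  qed
qed

lemma local_conf: "stp n w a \<Longrightarrow> stp n w b \<Longrightarrow> joinable n a b"
proof -
  assume "stp n w a" "stp n w b"
  then obtain x1 l1 r1 y1 x2 l2 r2 y2 where
    h: "rl l1 r1" "w = x1 @ l1 @ y1" "a = x1 @ r1 @ y1" "rl l2 r2" "w = x2 @ l2 @ y2" "b = x2 @ r2 @ y2"
      "w \<in> words n"
    unfolding stp_def by blast
  show ?thesis
  proof (cases "length x1 \<le> length x2")
    case True then show ?thesis using local_conf_aux[OF h(1,4) True h(2,5,7)] h by simp
  next
    case False then show ?thesis using local_conf_aux[OF h(4,1) _ h(5,2,7)] h
      by (simp add: joinable_sym)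
  qed
qed

lemma newman: "(stp n)\<^sup>*\<^sup>* x y \<Longrightarrow> (stp n)\<^sup>*\<^sup>* x z \<Longrightarrow> joinable n y z"
proof (induction "mu n x" arbitrary: x y z rule: less_induct)
  case less
  show ?case
  proof (cases "x = y")
    case True then show ?thesis using less.prems unfolding joinable_def by blast
  next
    case xy: False
    show ?thesis
    proof (cases "x = z")
      case True then show ?thesis using less.prems unfolding joinable_def by blast
    next
      case xz: False
      obtain y1 where y1: "stp n x y1" "(stp n)\<^sup>*\<^sup>* y1 y"
        using less.prems(1) xy by (metis converse_rtranclpE)
      obtain z1 where z1: "stp n x z1" "(stp n)\<^sup>*\<^sup>* z1 z"
        using less.prems(2) xz by (metis converse_rtranclpE)
      obtain u where u: "(stp n)\<^sup>*\<^sup>* y1 u" "(stp n)\<^sup>*\<^sup>* z1 u"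
        using local_conf[OF y1(1) z1(1)] unfolding joinable_def by blast
      obtain v where v: "(stp n)\<^sup>*\<^sup>* y v" "(stp n)\<^sup>*\<^sup>* u v"
        using less.hyps[OF stp_mu[OF y1(1)] y1(2) u(1)] unfolding joinable_def by blast
      have "(stp n)\<^sup>*\<^sup>* z1 v" using u(2) v(2) by simp
      then obtain q where q: "(stp n)\<^sup>*\<^sup>* z q" "(stp n)\<^sup>*\<^sup>* v q"
        using less.hyps[OF stp_mu[OF z1(1)] z1(2)] unfolding joinable_def by blast
      show ?thesis unfolding joinable_def using v(1) q by (meson rtranclp_trans)
    qed
  qed
qed

lemma eqw_words: "eqw n u v \<Longrightarrow> u \<in> words n \<and> v \<in> words n"
  by (induction rule: eqw.induct) auto

lemma eqw_joinable: "eqw n u v \<Longrightarrow> joinable n u v"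
proof (induction rule: eqw.induct)
  case (eqw_refl w) then show ?case unfolding joinable_def by blast
next
  case (eqw_sym u v) then show ?case by (simp add: joinable_sym)
next
  case (eqw_trans u v w)
  then obtain a b where "(stp n)\<^sup>*\<^sup>* u a" "(stp n)\<^sup>*\<^sup>* v a" "(stp n)\<^sup>*\<^sup>* v b" "(stp n)\<^sup>*\<^sup>* w b"
    unfolding joinable_def by blast
  moreover then obtain c where "(stp n)\<^sup>*\<^sup>* a c" "(stp n)\<^sup>*\<^sup>* b c"
    using newman unfolding joinable_def by blast
  ultimately show ?case unfolding joinable_def by (meson rtranclp_trans)
next
  case (eqw_inv u v j)
  have "stp n (u @ [j,j] @ v) (u @ v)" by (rule stpA) (use eqw_inv in auto)
  then show ?case unfolding joinable_def by blast
next
  case (eqw_braid u v i)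
  have "stp n (u @ [i, Suc i, i] @ v) (u @ [Suc i, i, Suc i] @ v)" by (rule stpB) (use eqw_braid in auto)
  then show ?case unfolding joinable_def by blast
qed

lemma stp_eqw: "stp n w w' \<Longrightarrow> eqw n w w'"
proof -
  assume "stp n w w'"
  then obtain x l r y where h: "rl l r" "w = x @ l @ y" "w' = x @ r @ y" "w \<in> words n"
    unfolding stp_def by blast
  then consider (A) i where "l = [i,i]" "r = []" | (B) i where "l = [i,Suc i,i]" "r = [Suc i,i,Suc i]"
    unfolding rl_def by blast
  then show ?thesis
  proof cases
    case (A i)
    then show ?thesis using h eqw.eqw_inv[of x n y i] by (auto simp: words_def)
  next
    case (B i)
    then show ?thesis using h eqw.eqw_braid[of x n y i] by (auto simp: words_def)
  qed
qed

lemma stps_eqw: "(stp n)\<^sup>*\<^sup>* w w' \<Longrightarrow> w \<in> words n \<Longrightarrow> eqw n w w'"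
proof (induction rule: rtranclp_induct)
  case base then show ?case by (rule eqw.eqw_refl)
next
  case (step y z) then show ?case by (meson eqw.eqw_trans stp_eqw)
qed

fun irr :: "nat list \<Rightarrow> bool" where
  "irr (a # b # c # r) = (a \<noteq> b \<and> \<not> (b = Suc a \<and> c = a) \<and> irr (b # c # r))"
| "irr [a, b] = (a \<noteq> b)"
| "irr _ = True"

lemma irr_Cons: "irr (a # r) \<longleftrightarrow> irr r \<and> (r \<noteq> [] \<longrightarrow> a \<noteq> hd r) \<and>
   (length r \<ge> 2 \<longrightarrow> \<not> (r ! 0 = Suc a \<and> r ! 1 = a))"
  by (cases r rule: irr.cases) auto

lemma irr_tl: "irr (a # r) \<Longrightarrow> irr r"
  by (simp add: irr_Cons)

lemma irr_suffix: "irr (x @ y) \<Longrightarrow> irr y"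
  by (induction x) (auto dest: irr_tl)

lemma irr_no_stp: "irr w \<Longrightarrow> \<not> stp n w w'"
proof
  assume i: "irr w" and "stp n w w'"
  then obtain x l r y where h: "rl l r" "w = x @ l @ y"
    unfolding stp_def by blast
  then have "irr (l @ y)" using i irr_suffix by blast
  then show False using h(1) unfolding rl_def by (auto simp: irr_Cons)
qed

lemma stp_Cons: "stp n w w' \<Longrightarrow> a \<in> {1..<n} \<Longrightarrow> stp n (a # w) (a # w')"
  using stp_ctx[of n w w' "[a]" "[]"] stp_def by auto

lemma not_irr_stp: "w \<in> words n \<Longrightarrow> \<not> irr w \<Longrightarrow> \<exists>w'. stp n w w'"
proof (induction w rule: irr.induct)
  case (1 a b c r)
  show ?case
  proof (cases "a = b")
    case True
    then have "stp n ([] @ [a,a] @ (c # r)) ([] @ (c # r))" by (intro stpA) (use 1 in auto)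
    then show ?thesis using True by auto
  next
    case False
    show ?thesis
    proof (cases "b = Suc a \<and> c = a")
      case True
      then have "stp n ([] @ [a,Suc a,a] @ r) ([] @ [Suc a,a,Suc a] @ r)" by (intro stpB) (use 1 in auto)
      then show ?thesis using True by auto
    next
      case F2: False
      then have "\<not> irr (b # c # r)" using 1 False by simp
      then obtain w' where "stp n (b # c # r) w'" using 1 by auto
      then show ?thesis using stp_Cons 1 by fastforce
    qed
  qed
next
  case (2 a b)
  then have "stp n ([] @ [a,a] @ []) ([] @ [])" by (intro stpA) auto
  then show ?case using 2 by auto
qed auto

lemma irr_rep: "w \<in> words n \<Longrightarrow> \<exists>w'. eqw n w w' \<and> irr w' \<and> length w' \<le> length w"
proof (induction "mu n w" arbitrary: w rule: less_induct)
  case less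
  show ?case
  proof (cases "irr w")
    case True then show ?thesis using less.prems eqw.eqw_refl by blast
  next
    case False
    then obtain w1 where s: "stp n w w1" using not_irr_stp less.prems by blast
    then obtain w' where "eqw n w1 w'" "irr w'" "length w' \<le> length w1"
      using less.hyps[OF stp_mu[OF s]] stp_words[OF s] by blast
    then show ?thesis using stp_eqw[OF s] stp_len[OF s] by (meson eqw.eqw_trans le_trans)
  qed
qed

lemma irr_unique: "eqw n u v \<Longrightarrow> irr u \<Longrightarrow> irr v \<Longrightarrow> u = v"
proof -
  assume e: "eqw n u v" and iu: "irr u" and iv: "irr v"
  then obtain c where c: "(stp n)\<^sup>*\<^sup>* u c" "(stp n)\<^sup>*\<^sup>* v c"
    using eqw_joinable unfolding joinable_def by blast
  have "u = c" using c(1) iu by (metis converse_rtranclpE irr_no_stp)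
  moreover have "v = c" using c(2) iv by (metis converse_rtranclpE irr_no_stp)
  ultimately show ?thesis by simp
qed

section \<open>The group L n\<close>

definition cls :: "nat \<Rightarrow> nat list \<Rightarrow> nat list set" where
  "cls n w = wrel n `` {w}"

lemma equiv_wrel: "equiv (words n) (wrel n)"
proof (rule equivI)
  show "wrel n \<subseteq> words n \<times> words n" unfolding wrel_def by (auto dest: eqw_words)
  show "refl_on (words n) (wrel n)"
    unfolding refl_on_def wrel_def by (simp add: eqw.eqw_refl)
  show "sym (wrel n)" unfolding sym_def wrel_def
    by (simp add: eqw.eqw_sym)
  show "trans (wrel n)" unfolding trans_def wrel_def
    using eqw.eqw_trans by fast
qed

lemma cls_eq_iff: "u \<in> words n \<Longrightarrow> v \<in> words n \<Longrightarrow> cls n u = cls n v \<longleftrightarrow> eqw n u v"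
proof -
  assume "u \<in> words n" "v \<in> words n"
  then have "(u, v) \<in> wrel n \<longleftrightarrow> eqw n u v" unfolding wrel_def by simp
  then show ?thesis unfolding cls_def using equiv_class_eq_iff[OF equiv_wrel, of u v n] \<open>u \<in> words n\<close> \<open>v \<in> words n\<close>
    by (metis equiv_wrel eq_equiv_class_iff)
qed

lemma cls_carrier: "w \<in> words n \<Longrightarrow> cls n w \<in> carrier (L n)"
  unfolding cls_def L_def by (simp add: quotient_def) blast

lemma carrier_cls: "A \<in> carrier (L n) \<Longrightarrow> \<exists>w \<in> words n. A = cls n w"
  unfolding cls_def L_def by (simp add: quotient_def)

lemma some_cls: "w \<in> words n \<Longrightarrow> eqw n w (SOME a. a \<in> cls n w)"
proof -
  assume w: "w \<in> words n"
  have "w \<in> cls n w" unfolding cls_def wrel_def using eqw.eqw_refl[OF w] by simp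
  then have "(SOME a. a \<in> cls n w) \<in> cls n w" by (rule someI)
  then show ?thesis unfolding cls_def wrel_def by simp
qed

lemma eqw_app_right: "eqw n u u' \<Longrightarrow> v \<in> words n \<Longrightarrow> eqw n (u @ v) (u' @ v)"
proof (induction rule: eqw.induct)
  case (eqw_refl w) then show ?case by (simp add: eqw.eqw_refl)
next
  case (eqw_sym u v) then show ?case using eqw.eqw_sym by blast
next
  case (eqw_trans u v w) then show ?case using eqw.eqw_trans by blast
next
  case (eqw_inv u v' j) then show ?case using eqw.eqw_inv[of u n "v' @ v" j] by simp
next
  case (eqw_braid u v' i) then show ?case using eqw.eqw_braid[of u n "v' @ v" i] by simp
qed

lemma eqw_app_left: "eqw n v v' \<Longrightarrow> u \<in> words n \<Longrightarrow> eqw n (u @ v) (u @ v')"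
proof (induction rule: eqw.induct)
  case (eqw_refl w) then show ?case by (simp add: eqw.eqw_refl)
next
  case (eqw_sym u v) then show ?case using eqw.eqw_sym by blast
next
  case (eqw_trans u v w) then show ?case using eqw.eqw_trans by blast
next
  case (eqw_inv u' v' j) then show ?case using eqw.eqw_inv[of "u @ u'" n v' j] by simp
next
  case (eqw_braid u' v' i) then show ?case using eqw.eqw_braid[of "u @ u'" n v' i] by simp
qed

lemma eqw_app: "eqw n u u' \<Longrightarrow> eqw n v v' \<Longrightarrow> eqw n (u @ v) (u' @ v')"
proof -
  assume a: "eqw n u u'" "eqw n v v'"
  have "eqw n (u @ v) (u' @ v)" using eqw_app_right[OF a(1)] eqw_words[OF a(2)] by blast
  moreover have "eqw n (u' @ v) (u' @ v')" using eqw_app_left[OF a(2)] eqw_words[OF a(1)] by blast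
  ultimately show ?thesis by (rule eqw.eqw_trans)
qed

lemma mult_cls: "u \<in> words n \<Longrightarrow> v \<in> words n \<Longrightarrow> cls n u \<otimes>\<^bsub>L n\<^esub> cls n v = cls n (u @ v)"
proof -
  assume u: "u \<in> words n" and v: "v \<in> words n"
  have "eqw n ((SOME a. a \<in> cls n u) @ (SOME b. b \<in> cls n v)) (u @ v)"
    using eqw_app[OF eqw.eqw_sym[OF some_cls[OF u]] eqw.eqw_sym[OF some_cls[OF v]]] .
  then have "cls n ((SOME a. a \<in> cls n u) @ (SOME b. b \<in> cls n v)) = cls n (u @ v)"
    using cls_eq_iff[of _ n "u @ v"] eqw_words by metis
  then show ?thesis unfolding L_def by (simp add: cls_def)
qed

lemma one_cls: "\<one>\<^bsub>L n\<^esub> = cls n []"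
  unfolding L_def cls_def by simp

lemma eqw_rev_inv: "w \<in> words n \<Longrightarrow> eqw n (rev w @ w) []"
proof (induction w)
  case Nil then show ?case by (simp add: eqw.eqw_refl)
next
  case (Cons a w)
  have "eqw n (rev w @ [a,a] @ w) (rev w @ w)"
    by (rule eqw.eqw_inv) (use Cons.prems in auto)
  moreover have "eqw n (rev w @ w) []" using Cons by simp
  ultimately have "eqw n (rev w @ [a,a] @ w) []" by (rule eqw.eqw_trans)
  then show ?case by simp
qed

lemma group_L: "group (L n)"
proof (rule groupI)
  fix x y assume "x \<in> carrier (L n)" "y \<in> carrier (L n)"
  then obtain u v where "u \<in> words n" "v \<in> words n" "x = cls n u" "y = cls n v"
    using carrier_cls by blast
  then show "x \<otimes>\<^bsub>L n\<^esub> y \<in> carrier (L n)" by (simp add: mult_cls cls_carrier)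
next
  show "\<one>\<^bsub>L n\<^esub> \<in> carrier (L n)" by (simp add: one_cls cls_carrier)
next
  fix x y z assume "x \<in> carrier (L n)" "y \<in> carrier (L n)" "z \<in> carrier (L n)"
  then obtain u v w where "u \<in> words n" "v \<in> words n" "w \<in> words n" "x = cls n u" "y = cls n v" "z = cls n w"
    using carrier_cls by meson
  then show "x \<otimes>\<^bsub>L n\<^esub> y \<otimes>\<^bsub>L n\<^esub> z = x \<otimes>\<^bsub>L n\<^esub> (y \<otimes>\<^bsub>L n\<^esub> z)" by (simp add: mult_cls)
next
  fix x assume "x \<in> carrier (L n)"
  then obtain u where "u \<in> words n" "x = cls n u" using carrier_cls by blast
  then show "\<one>\<^bsub>L n\<^esub> \<otimes>\<^bsub>L n\<^esub> x = x" by (simp add: mult_cls one_cls)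
next
  fix x assume "x \<in> carrier (L n)"
  then obtain u where u: "u \<in> words n" "x = cls n u" using carrier_cls by blast
  have r: "rev u \<in> words n" using u by (simp add: words_def)
  have "cls n (rev u) \<otimes>\<^bsub>L n\<^esub> x = \<one>\<^bsub>L n\<^esub>"
    using u r by (simp add: mult_cls one_cls cls_eq_iff eqw_rev_inv)
  then show "\<exists>y\<in>carrier (L n). y \<otimes>\<^bsub>L n\<^esub> x = \<one>\<^bsub>L n\<^esub>" using r cls_carrier by blast
qed

lemma inv_cls: "w \<in> words n \<Longrightarrow> inv\<^bsub>L n\<^esub> (cls n w) = cls n (rev w)"
proof -
  assume w: "w \<in> words n"
  interpret group "L n" by (rule group_L)
  have r: "rev w \<in> words n" using w by (simp add: words_def)
  have "cls n (rev w) \<otimes>\<^bsub>L n\<^esub> cls n w = \<one>\<^bsub>L n\<^esub>"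
    using w r by (simp add: mult_cls one_cls cls_eq_iff eqw_rev_inv)
  then show ?thesis using inv_equality[of "cls n (rev w)" "cls n w"] w r cls_carrier by metis
qed

section \<open>Permutations\<close>

lemma pw_append: "perm_of_word (xs @ ys) = perm_of_word xs \<circ> perm_of_word ys"
  unfolding perm_of_word_def by (induction xs) auto

lemma pw_Nil[simp]: "perm_of_word [] = id"
  unfolding perm_of_word_def by simp

lemma pw_Cons: "perm_of_word (a # xs) = transpose a (Suc a) \<circ> perm_of_word xs"
  unfolding perm_of_word_def by simp

lemma braid_transp: "transpose i (Suc i) \<circ> transpose (Suc i) (Suc (Suc i)) \<circ> transpose i (Suc i)
   = transpose (Suc i) (Suc (Suc i)) \<circ> transpose i (Suc i) \<circ> transpose (Suc i) (Suc (Suc i))"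
  by (auto simp: fun_eq_iff transpose_def)

lemma eqw_perm: "eqw n u v \<Longrightarrow> perm_of_word u = perm_of_word v"
proof (induction rule: eqw.induct)
  case (eqw_inv u v j)
  then show ?case by (simp add: pw_append pw_Cons comp_assoc)
next
  case (eqw_braid u v i)
  have b: "perm_of_word [i, Suc i, i] = perm_of_word [Suc i, i, Suc i]"
    using braid_transp[of i] by (simp add: pw_Cons comp_assoc)
  have "perm_of_word (u @ [i, Suc i, i] @ v) = perm_of_word u \<circ> perm_of_word [i, Suc i, i] \<circ> perm_of_word v"
    by (simp only: pw_append comp_assoc)
  moreover have "perm_of_word (u @ [Suc i, i, Suc i] @ v) = perm_of_word u \<circ> perm_of_word [Suc i, i, Suc i] \<circ> perm_of_word v"
    by (simp only: pw_append comp_assoc)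
  ultimately show ?case using b by simp
qed auto

lemma pw_rev: "perm_of_word (rev w) \<circ> perm_of_word w = id"
proof (induction w)
  case Nil then show ?case by simp
next
  case (Cons a w)
  have "perm_of_word (rev (a # w)) \<circ> perm_of_word (a # w)
      = perm_of_word (rev w) \<circ> (transpose a (Suc a) \<circ> transpose a (Suc a)) \<circ> perm_of_word w"
    by (simp add: pw_append pw_Cons fun_eq_iff)
  also have "\<dots> = id" using Cons by (simp add: fun_eq_iff)
  finally show ?case .
qed

lemma piL_cls: "w \<in> words n \<Longrightarrow> piL n (cls n w) = perm_of_word w"
  unfolding piL_def using eqw_perm[OF some_cls] by simp

lemma PL_cls: "xw \<in> words n \<Longrightarrow> perm_of_word xw = id \<Longrightarrow> cls n xw \<in> PL n"
  unfolding PL_def kernel_def by (simp add: cls_carrier piL_cls sym_group_one)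

section \<open>Word-level centralizer\<close>

lemma eqw_trans' [trans]: "eqw n a b \<Longrightarrow> eqw n b c \<Longrightarrow> eqw n a c"
  by (rule eqw.eqw_trans)

lemma eqw_ctx: "eqw n u v \<Longrightarrow> a \<in> words n \<Longrightarrow> b \<in> words n \<Longrightarrow> eqw n (a @ u @ b) (a @ v @ b)"
  using eqw_app_left eqw_app_right eqw_words by (metis append_assoc)

lemma eqw_cancel: "A \<in> words n \<Longrightarrow> a \<in> words n \<Longrightarrow> b \<in> words n \<Longrightarrow> eqw n (a @ rev A @ A @ b) (a @ b)"
  using eqw_ctx[OF eqw_rev_inv] by (metis append.assoc append_Nil)

lemma eqw_cancel': "A \<in> words n \<Longrightarrow> a \<in> words n \<Longrightarrow> b \<in> words n \<Longrightarrow> eqw n (a @ A @ rev A @ b) (a @ b)"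
  using eqw_cancel[of "rev A" n a b] by simp

definition centw :: "nat \<Rightarrow> nat list \<Rightarrow> bool" where
  "centw n C \<longleftrightarrow> C \<in> words n \<and> (\<forall>xw \<in> words n. perm_of_word xw = id \<longrightarrow> eqw n (C @ xw) (xw @ C))"

lemma centw_conj:
  assumes c: "centw n C" and A: "A \<in> words n"
  shows "centw n (A @ C @ rev A)"
  unfolding centw_def
proof (intro conjI ballI impI)
  have C: "C \<in> words n" using c centw_def by blast
  show "A @ C @ rev A \<in> words n" using A C by simp
  fix xw assume xw: "xw \<in> words n" "perm_of_word xw = id"
  let ?xw' = "rev A @ xw @ A"
  have xw': "?xw' \<in> words n" "perm_of_word ?xw' = id"
    using xw A pw_rev[of A] by (auto simp: pw_append)
  have e: "eqw n (C @ ?xw') (?xw' @ C)" using c xw' centw_def by blast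
  have "eqw n ((A @ C @ rev A) @ xw) (A @ C @ rev A @ xw @ A @ rev A)"
    using eqw.eqw_sym[OF eqw_cancel'[OF A, of "A @ C @ rev A @ xw" "[]"]] A C xw by simp
  also have "eqw n (A @ C @ rev A @ xw @ A @ rev A) (A @ (?xw' @ C) @ rev A)"
    using eqw_ctx[OF e A, of "rev A"] A by simp
  also have "eqw n (A @ (?xw' @ C) @ rev A) (xw @ (A @ C @ rev A))"
    using eqw_cancel'[OF A, of "[]" "xw @ A @ C @ rev A"] A C xw by simp
  finally show "eqw n ((A @ C @ rev A) @ xw) (xw @ (A @ C @ rev A))" .
qed

section \<open>Junctions\<close>

lemma irr_append:
  assumes "irr a" "irr b"
    "a \<noteq> [] \<Longrightarrow> b \<noteq> [] \<Longrightarrow> last a \<noteq> hd b"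
    "length a \<ge> 2 \<Longrightarrow> b \<noteq> [] \<Longrightarrow> \<not> (last a = Suc (a ! (length a - 2)) \<and> hd b = a ! (length a - 2))"
    "a \<noteq> [] \<Longrightarrow> length b \<ge> 2 \<Longrightarrow> \<not> (b ! 0 = Suc (last a) \<and> b ! 1 = last a)"
  shows "irr (a @ b)"
  using assms
proof (induction a)
  case Nil then show ?case by simp
next
  case (Cons x a)
  show ?case
  proof (cases "a = []")
    case True
    then show ?thesis using Cons.prems by (auto simp: irr_Cons hd_conv_nth)
  next
    case False
    have ia: "irr a" using Cons.prems(1) irr_tl by blast
    have iab: "irr (a @ b)"
    proof (rule Cons.IH[OF ia Cons.prems(2)])
      show "a \<noteq> [] \<Longrightarrow> b \<noteq> [] \<Longrightarrow> last a \<noteq> hd b" using Cons.prems(3) False by simp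
      show "2 \<le> length a \<Longrightarrow> b \<noteq> [] \<Longrightarrow> \<not> (last a = Suc (a ! (length a - 2)) \<and> hd b = a ! (length a - 2))"
        using Cons.prems(4) False by (auto simp: nth_Cons' numeral_2_eq_2)
      show "a \<noteq> [] \<Longrightarrow> 2 \<le> length b \<Longrightarrow> \<not> (b ! 0 = Suc (last a) \<and> b ! 1 = last a)"
        using Cons.prems(5) False by simp
    qed
    have xa: "x \<noteq> hd a" "length a \<ge> 2 \<Longrightarrow> \<not> (a ! 0 = Suc x \<and> a ! 1 = x)"
      using Cons.prems(1) False by (auto simp: irr_Cons)
    show ?thesis
    proof (cases "length a \<ge> 2")
      case True
      then show ?thesis using iab xa False by (auto simp: irr_Cons nth_append hd_append)
    next
      case F2: False
      have "length a \<noteq> 0" using False by simp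
      then have l1: "length a = 1" using F2 by linarith
      then obtain y where a: "a = [y]" by (auto simp: length_Suc_conv)
      have "b \<noteq> [] \<Longrightarrow> \<not> (y = Suc x \<and> hd b = x)" using Cons.prems(4) a by simp
      then show ?thesis using iab xa a by (cases b) (auto simp: irr_Cons)
    qed
  qed
qed

definition vs :: "nat list list" where
  "vs = [[1,3,2],[2,3,1],[1,3],[3,1],[2,3,1,3],[3,1,3,2]]"

definition Vs :: "nat list list" where
  "Vs = map (\<lambda>v. concat (replicate 12 v)) vs"

lemma pw_fix: "x \<notin> set w \<Longrightarrow> x \<notin> Suc ` set w \<Longrightarrow> perm_of_word w x = x"
  by (induction w) (auto simp: pw_Cons)

lemma Vs_props:
  assumes "V \<in> set Vs"
  shows "irr V" "length V \<ge> 2" "set V \<subseteq> {1,2,3}" "perm_of_word V = id"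
proof -
  show "irr V" "length V \<ge> 2" "set V \<subseteq> {1,2,3}"
    using assms unfolding Vs_def vs_def by (auto simp: numeral_eq_Suc)
  show "perm_of_word V = id"
  proof
    fix x
    show "perm_of_word V x = id x"
    proof (cases "x \<in> {1,2,3,4}")
      case True
      then show ?thesis using assms unfolding Vs_def vs_def
        by (auto simp: numeral_eq_Suc perm_of_word_def transpose_def)
    next
      case False
      have "set V \<subseteq> {1,2,3}" using assms unfolding Vs_def vs_def by (auto simp: numeral_eq_Suc)
      then have "perm_of_word V x = x" using False by (intro pw_fix) auto
      then show ?thesis by simp
    qed
  qed
qed

definition good :: "nat list \<Rightarrow> nat \<Rightarrow> nat \<Rightarrow> nat \<Rightarrow> nat \<Rightarrow> bool \<Rightarrow> bool" where
  "good V f l s m P \<longleftrightarrow> l \<noteq> hd V \<and> (P \<longrightarrow> \<not> (l = Suc m \<and> hd V = m)) \<and> \<not> (V!0 = Suc l \<and> V!1 = l)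
    \<and> last V \<noteq> f \<and> \<not> (last V = Suc (V!(length V - 2)) \<and> f = V!(length V - 2))
    \<and> (P \<longrightarrow> \<not> (f = Suc (last V) \<and> s = last V)) \<and> (f \<noteq> hd V \<or> l \<noteq> last V)"

lemma sel:
  fixes f l s m :: nat
  assumes a: "f \<ge> 1" "l \<ge> 1" "P \<longrightarrow> s \<ge> 1" "P \<longrightarrow> m \<ge> 1" "\<not> P \<longrightarrow> f = l" "P \<longrightarrow> f \<noteq> l"
  shows "\<exists>V\<in>set Vs. good V f l s m P"
proof -
  define V1 where "V1 = concat (replicate 12 [1::nat,3,2])"
  define V2 where "V2 = concat (replicate 12 [2::nat,3,1])"
  define V3 where "V3 = concat (replicate 12 [1::nat,3])"
  define V4 where "V4 = concat (replicate 12 [3::nat,1])"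
  define V5 where "V5 = concat (replicate 12 [2::nat,3,1,3])"
  define V6 where "V6 = concat (replicate 12 [3::nat,1,3,2])"
  have m: "V1 \<in> set Vs" "V2 \<in> set Vs" "V3 \<in> set Vs" "V4 \<in> set Vs" "V5 \<in> set Vs" "V6 \<in> set Vs"
    unfolding Vs_def vs_def V1_def V2_def V3_def V4_def V5_def V6_def by simp_all
  have d1: "hd V1 = 1" "V1!0 = 1" "V1!1 = 3" "last V1 = 2" "V1!(length V1 - 2) = 3"
    unfolding V1_def by (simp_all add: numeral_eq_Suc)
  have d2: "hd V2 = 2" "V2!0 = 2" "V2!1 = 3" "last V2 = 1" "V2!(length V2 - 2) = 3"
    unfolding V2_def by (simp_all add: numeral_eq_Suc)
  have d3: "hd V3 = 1" "V3!0 = 1" "V3!1 = 3" "last V3 = 3" "V3!(length V3 - 2) = 1"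
    unfolding V3_def by (simp_all add: numeral_eq_Suc)
  have d4: "hd V4 = 3" "V4!0 = 3" "V4!1 = 1" "last V4 = 1" "V4!(length V4 - 2) = 3"
    unfolding V4_def by (simp_all add: numeral_eq_Suc)
  have d5: "hd V5 = 2" "V5!0 = 2" "V5!1 = 3" "last V5 = 3" "V5!(length V5 - 2) = 1"
    unfolding V5_def by (simp_all add: numeral_eq_Suc)
  have d6: "hd V6 = 3" "V6!0 = 3" "V6!1 = 1" "last V6 = 2" "V6!(length V6 - 2) = 3"
    unfolding V6_def by (simp_all add: numeral_eq_Suc)
  consider "l = 1" | "l = 2" | "l = 3" | "l \<ge> 4" using a(2) by linarith
  then show ?thesis
  proof cases
    case 1
    then show ?thesis
    proof (cases "f = 1 \<or> f = 2")
      case True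
      then have "good V5 f l s m P" using 1 a unfolding good_def d5 by auto
      then show ?thesis using m by blast
    next
      case False
      then have "good V2 f l s m P" using 1 a unfolding good_def d2 by auto
      then show ?thesis using m by blast
    qed
  next
    case 2
    note L2 = this
    consider "f = 1" | "f = 2" | "f \<noteq> 1 \<and> f \<noteq> 2" by blast
    then show ?thesis
    proof cases
      case 3
      then have "good V4 f l s m P" using L2 a unfolding good_def d4 by auto
      then show ?thesis using m by blast
    next
      case 1
      then have "good V6 f l s m P" using L2 a unfolding good_def d6 by auto
      then show ?thesis using m by blast
    next
      case 2
      then have "good V3 f l s m P" using L2 a unfolding good_def d3 by auto
      then show ?thesis using m by blast
    qed
  next
    case 3
    show ?thesis
    proof (cases "f = 2")
      case True
      then have "good V3 f l s m P" using 3 a unfolding good_def d3 by auto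
      then show ?thesis using m by blast
    next
      case False
      then have "good V1 f l s m P" using 3 a unfolding good_def d1 by auto
      then show ?thesis using m by blast
    qed
  next
    case 4
    note L4 = this
    consider "f = 2" | "f = 3" | "f \<noteq> 2 \<and> f \<noteq> 3" by blast
    then show ?thesis
    proof cases
      case 1
      then have "good V3 f l s m P" using L4 a unfolding good_def d3 by auto
      then show ?thesis using m by blast
    next
      case 2
      then have "good V2 f l s m P" using L4 a unfolding good_def d2 by auto
      then show ?thesis using m by blast
    next
      case 3
      then have "good V1 f l s m P" using L4 a unfolding good_def d1 by auto
      then show ?thesis using m by blast
    qed
  qed
qed

lemma centw_eqw: "centw n D \<Longrightarrow> eqw n w D \<Longrightarrow> centw n w"
  unfolding centw_def
proof (intro conjI ballI impI)
  assume c: "D \<in> words n \<and> (\<forall>xw\<in>words n. perm_of_word xw = id \<longrightarrow> eqw n (D @ xw) (xw @ D))"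
    and e: "eqw n w D"
  show "w \<in> words n" using eqw_words[OF e] by blast
  fix xw assume xw: "xw \<in> words n" "perm_of_word xw = id"
  have "eqw n (w @ xw) (D @ xw)" using eqw_app_right[OF e xw(1)] .
  also have "eqw n (D @ xw) (xw @ D)" using c xw by blast
  also have "eqw n (xw @ D) (xw @ w)" using eqw_app_left[OF eqw.eqw_sym[OF e] xw(1)] .
  finally show "eqw n (w @ xw) (xw @ w)" .
qed

lemma centw_trivial:
  assumes n: "n \<ge> 4" and c: "centw n C"
  shows "eqw n C []"
proof (rule ccontr)
  assume nC: "\<not> eqw n C []"
  have Cw: "C \<in> words n" using c centw_def by blast
  define Q where "Q k \<longleftrightarrow> (\<exists>A w. A \<in> words n \<and> irr w \<and> length w = k \<and> eqw n w (A @ C @ rev A))" for k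
  obtain w0 where w0: "eqw n C w0" "irr w0" using irr_rep[OF Cw] by blast
  have "Q (length w0)" unfolding Q_def using w0 eqw.eqw_sym[OF w0(1)]
    by (intro exI[of _ "[]"] exI[of _ w0]) simp
  then have QL: "Q (LEAST k. Q k)" by (rule LeastI)
  then obtain A w where Aw: "A \<in> words n" "irr w" "length w = (LEAST k. Q k)" "eqw n w (A @ C @ rev A)"
    unfolding Q_def by blast
  have ww: "w \<in> words n" using eqw_words[OF Aw(4)] by blast
  have cw: "centw n w" using centw_eqw[OF centw_conj[OF c Aw(1)] Aw(4)] .
  have wne: "w \<noteq> []"
  proof
    assume "w = []"
    then have e: "eqw n (A @ C @ rev A) []" using eqw.eqw_sym[OF Aw(4)] by simp
    have "eqw n C ([] @ rev A @ A @ C)"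
      using eqw.eqw_sym[OF eqw_cancel[OF Aw(1), of "[]" "C"]] Aw(1) Cw by simp
    also have "eqw n ([] @ rev A @ A @ C) ((rev A @ A @ C) @ rev A @ A @ [])"
      using eqw.eqw_sym[OF eqw_cancel[OF Aw(1), of "rev A @ A @ C" "[]"]] Aw(1) Cw by simp
    also have "eqw n ((rev A @ A @ C) @ rev A @ A @ []) (rev A @ [] @ A)"
      using eqw_ctx[OF e, of "rev A" "A"] Aw(1) by simp
    also have "eqw n (rev A @ [] @ A) []"
      using eqw_rev_inv[OF Aw(1)] by simp
    finally show False using nC by simp
  qed
  show False
  proof (cases "length w \<ge> 2 \<and> hd w = last w")
    case True
    obtain x u where xu: "w = x # u @ [x]"
    proof -
      have "w = hd w # tl w" using wne by simp
      moreover have "tl w \<noteq> []" using True by (cases w) auto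
      then have "tl w = butlast (tl w) @ [last (tl w)]" by simp
      moreover have "last (tl w) = last w" using \<open>tl w \<noteq> []\<close> wne by (cases w) auto
      ultimately have "w = hd w # butlast (tl w) @ [hd w]" using True by metis
      then show ?thesis using that by blast
    qed
    have xw: "x \<in> {1..<n}" "u \<in> words n" using ww xu by auto
    have A': "x # A \<in> words n" using xw Aw(1) by simp
    have "eqw n u ([x,x] @ u @ [x,x])"
    proof -
      have x: "x \<le> n - 1" using xw by auto
      have "eqw n u (u @ [x,x])" using eqw.eqw_sym[OF eqw.eqw_inv[of u n "[]" x]] xw x by simp
      moreover have "eqw n (u @ [x,x]) ([x,x] @ u @ [x,x])"
        using eqw.eqw_sym[OF eqw.eqw_inv[of "[]" n "u @ [x,x]" x]] xw x by simp
      ultimately show ?thesis by (rule eqw.eqw_trans)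
    qed
    also have "eqw n ([x] @ w @ [x]) ([x] @ (A @ C @ rev A) @ [x])"
      by (rule eqw_ctx[OF Aw(4)]) (use xw in simp_all)
    ultimately have e: "eqw n u ((x # A) @ C @ rev (x # A))" using xu by (simp add: eqw.eqw_trans)
    obtain u' where u': "eqw n u u'" "irr u'" "length u' \<le> length u" using irr_rep[OF xw(2)] by blast
    have "Q (length u')" unfolding Q_def
      using A' u'(2) eqw.eqw_trans[OF eqw.eqw_sym[OF u'(1)] e] by blast
    then have "(LEAST k. Q k) \<le> length u'" by (rule Least_le)
    then show False using Aw(3) u'(3) xu by simp
  next
    case False
    define P where "P = (length w \<ge> 2)"
    have lw: "set w \<subseteq> {1..<n}" using ww words_def by blast
    have f1: "hd w \<ge> 1" "last w \<ge> 1" using lw wne by (auto simp: subset_iff)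
    have s1: "P \<longrightarrow> w!1 \<ge> 1" "P \<longrightarrow> w!(length w - 2) \<ge> 1"
      using lw unfolding P_def by (auto simp: subset_iff)
    have fl2: "P \<longrightarrow> hd w \<noteq> last w" using False unfolding P_def by blast
    have fl1: "\<not> P \<longrightarrow> hd w = last w"
    proof
      assume "\<not> P"
      moreover have "length w \<noteq> 0" using wne by simp
      ultimately have "length w = 1" unfolding P_def by linarith
      then obtain y where "w = [y]" by (auto simp: length_Suc_conv)
      then show "hd w = last w" by simp
    qed
    note fl = fl1 fl2
    obtain V where V: "V \<in> set Vs" "good V (hd w) (last w) (w!1) (w!(length w - 2)) P"
      using sel[OF f1 s1 fl] by blast
    note Vp = Vs_props[OF V(1)]
    have Vw: "V \<in> words n" using Vp(3) n unfolding words_def by auto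
    have Vne: "V \<noteq> []" using Vp(2) by auto
    note g = V(2)[unfolded good_def]
    have i1: "irr (w @ V)"
    proof (rule irr_append[OF Aw(2) Vp(1)])
      show "last w \<noteq> hd V" using g by blast
      show "\<not> (last w = Suc (w ! (length w - 2)) \<and> hd V = w ! (length w - 2))" if "length w \<ge> 2"
        using g that unfolding P_def by blast
      show "\<not> (V ! 0 = Suc (last w) \<and> V ! 1 = last w)" using g by blast
    qed
    have i2: "irr (V @ w)"
    proof (rule irr_append[OF Vp(1) Aw(2)])
      show "last V \<noteq> hd w" using g by blast
      show "\<not> (last V = Suc (V ! (length V - 2)) \<and> hd w = V ! (length V - 2))" using g by blast
      show "\<not> (w ! 0 = Suc (last V) \<and> w ! 1 = last V)" if "length w \<ge> 2"
        using g that wne unfolding P_def by (simp add: hd_conv_nth)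
    qed
    have "eqw n (w @ V) (V @ w)" using cw Vw Vp(4) centw_def by blast
    then have "w @ V = V @ w" using irr_unique i1 i2 by blast
    then have "hd (w @ V) = hd (V @ w)" "last (w @ V) = last (V @ w)" by simp_all
    then have "hd w = hd V" "last w = last V" using wne Vne by simp_all
    then show False using V(2) unfolding good_def by simp
  qed
qed

theorem theorem5p4:
  fixes n :: nat
  assumes "n \<ge> 4"
  shows "inj_on (phi n) (carrier (L n))"
proof (rule inj_onI)
  fix g h assume g: "g \<in> carrier (L n)" and h: "h \<in> carrier (L n)" and eq: "phi n g = phi n h"
  obtain G where G: "G \<in> words n" "g = cls n G" using carrier_cls[OF g] by blast
  obtain H where H: "H \<in> words n" "h = cls n H" using carrier_cls[OF h] by blast
  have conj: "eqw n (rev G @ xw @ G) (rev H @ xw @ H)" if xw: "xw \<in> words n" "perm_of_word xw = id" for xw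
  proof -
    have p: "cls n xw \<in> PL n" using PL_cls[OF xw] .
    have "phi n g (cls n xw) = cls n (rev G @ xw @ G)"
      unfolding phi_def using p G xw by (simp add: inv_cls mult_cls)
    moreover have "phi n h (cls n xw) = cls n (rev H @ xw @ H)"
      unfolding phi_def using p H xw by (simp add: inv_cls mult_cls)
    ultimately have "cls n (rev G @ xw @ G) = cls n (rev H @ xw @ H)" using eq by simp
    then show ?thesis using cls_eq_iff G H xw by simp
  qed
  have "centw n (G @ rev H)"
    unfolding centw_def
  proof (intro conjI ballI impI)
    show "G @ rev H \<in> words n" using G H by simp
    fix xw assume xw: "xw \<in> words n" "perm_of_word xw = id"
    have "eqw n ((G @ rev H) @ xw) (G @ (rev H @ xw @ H) @ rev H)"
      using eqw.eqw_sym[OF eqw_cancel'[OF H(1), of "G @ rev H @ xw" "[]"]] G H xw by simp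
    also have "eqw n (G @ (rev H @ xw @ H) @ rev H) (G @ (rev G @ xw @ G) @ rev H)"
      by (rule eqw_ctx[OF eqw.eqw_sym[OF conj[OF xw]]]) (use G H in simp_all)
    also have "eqw n (G @ (rev G @ xw @ G) @ rev H) (xw @ (G @ rev H))"
      using eqw_cancel'[OF G(1), of "[]" "xw @ G @ rev H"] G H xw by simp
    finally show "eqw n ((G @ rev H) @ xw) (xw @ (G @ rev H))" .
  qed
  then have e: "eqw n (G @ rev H) []" using centw_trivial assms by blast
  have "eqw n G ((G @ rev H) @ H)"
    using eqw.eqw_sym[OF eqw_cancel[OF H(1), of G "[]"]] G H by simp
  also have "eqw n ((G @ rev H) @ H) ([] @ H)"
    by (rule eqw_app_right[OF e H(1)])
  finally have "eqw n G H" by simp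
  then show "g = h" using G H cls_eq_iff by simp
qed

end
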